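(* Let $G$ be a connected simple graph with at least $3$ vertices and let $v\in V(G)$ be a vertex that is not a cut vertex of $G$. Then $$\chi_{dom}(G)-1\leq \chi_{dom}(G-v)\leq \chi_{dom}(G)+\deg v-1.$$
   Context: All graphs are finite and simple. A dominated coloring (dom-coloring) of a graph $H$ is a proper vertex coloring of $H$ such that for every color class $C$ there is a vertex $x\in V(H)$ adjacent to every vertex of $C$ (i.e. $C\subseteq N_H(x)$). The dominated chromatic number $\chi_{dom}(H)$ is the minimum number of colors in a dominated coloring of $H$. $G-v$ denotes the graph obtained from $G$ by deleting $v$ and all edges incident with $v$; $\deg v$ is the degree of $v$ in $G$. *)

theory Defs
  imports Main
begin

definition sgraph :: "'a set \<Rightarrow> ('a \<Rightarrow> 'a \<Rightarrow> bool) \<Rightarrow> bool" where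
  "sgraph V E \<longleftrightarrow> finite V \<and> (\<forall>x y. E x y \<longrightarrow> x \<in> V \<and> y \<in> V)
     \<and> (\<forall>x y. E x y \<longrightarrow> E y x) \<and> (\<forall>x. \<not> E x x)"

definition nbhd :: "('a \<Rightarrow> 'a \<Rightarrow> bool) \<Rightarrow> 'a \<Rightarrow> 'a set" where
  "nbhd E x = {y. E x y}"

definition degree :: "('a \<Rightarrow> 'a \<Rightarrow> bool) \<Rightarrow> 'a \<Rightarrow> nat" where
  "degree E x = card (nbhd E x)"

definition del_vertex_V :: "'a set \<Rightarrow> 'a \<Rightarrow> 'a set" where
  "del_vertex_V V v = V - {v}"

definition del_vertex_E :: "('a \<Rightarrow> 'a \<Rightarrow> bool) \<Rightarrow> 'a \<Rightarrow> 'a \<Rightarrow> 'a \<Rightarrow> bool" where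
  "del_vertex_E E v = (\<lambda>x y. E x y \<and> x \<noteq> v \<and> y \<noteq> v)"

definition reach :: "('a \<Rightarrow> 'a \<Rightarrow> bool) \<Rightarrow> 'a \<Rightarrow> 'a \<Rightarrow> bool" where
  "reach E = E\<^sup>*\<^sup>*"

definition components :: "'a set \<Rightarrow> ('a \<Rightarrow> 'a \<Rightarrow> bool) \<Rightarrow> 'a set set" where
  "components V E = {{y \<in> V. reach E x y} | x. x \<in> V}"

definition connected_graph :: "'a set \<Rightarrow> ('a \<Rightarrow> 'a \<Rightarrow> bool) \<Rightarrow> bool" where
  "connected_graph V E \<longleftrightarrow> V \<noteq> {} \<and> (\<forall>x\<in>V. \<forall>y\<in>V. reach E x y)"

definition cut_vertex :: "'a set \<Rightarrow> ('a \<Rightarrow> 'a \<Rightarrow> bool) \<Rightarrow> 'a \<Rightarrow> bool" where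
  "cut_vertex V E v \<longleftrightarrow> v \<in> V \<and>
     card (components (del_vertex_V V v) (del_vertex_E E v)) > card (components V E)"

definition dom_coloring :: "'a set \<Rightarrow> ('a \<Rightarrow> 'a \<Rightarrow> bool) \<Rightarrow> ('a \<Rightarrow> nat) \<Rightarrow> nat \<Rightarrow> bool" where
  "dom_coloring V E c k \<longleftrightarrow>
     c ` V = {..<k}
     \<and> (\<forall>x\<in>V. \<forall>y\<in>V. E x y \<longrightarrow> c x \<noteq> c y)
     \<and> (\<forall>i<k. \<exists>x\<in>V. {y \<in> V. c y = i} \<subseteq> nbhd E x)"

definition chi_dom :: "'a set \<Rightarrow> ('a \<Rightarrow> 'a \<Rightarrow> bool) \<Rightarrow> nat" where
  "chi_dom V E = (LEAST k. \<exists>c. dom_coloring V E c k)"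

end

theory Submission
  imports Defs
begin

lemma gen_col:
  fixes c :: "'a \<Rightarrow> 'b"
  assumes fin: "finite V"
    and prp: "\<forall>x\<in>V. \<forall>y\<in>V. E x y \<longrightarrow> c x \<noteq> c y"
    and dom: "\<forall>u\<in>V. \<exists>x\<in>V. {y\<in>V. c y = c u} \<subseteq> nbhd E x"
  shows "\<exists>c'. dom_coloring V E c' (card (c ` V))"
proof -
  have "finite (c ` V)" using fin by simp
  then obtain h where h: "bij_betw h (c ` V) {0..<card (c ` V)}"
    using ex_bij_betw_finite_nat by blast
  have inj: "inj_on h (c ` V)" using h bij_betw_def by blast
  have img: "(h \<circ> c) ` V = {..<card (c ` V)}"
    using h by (simp add: bij_betw_def image_comp atLeast0LessThan)
  have p: "\<forall>x\<in>V. \<forall>y\<in>V. E x y \<longrightarrow> (h \<circ> c) x \<noteq> (h \<circ> c) y"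
    using prp inj by (auto dest: inj_onD)
  have d: "\<forall>i<card (c ` V). \<exists>x\<in>V. {y \<in> V. (h \<circ> c) y = i} \<subseteq> nbhd E x"
  proof (intro allI impI)
    fix i assume "i < card (c ` V)"
    then obtain u where u: "u \<in> V" "i = h (c u)" using img by (metis imageE lessThan_iff o_apply)
    have "{y \<in> V. (h \<circ> c) y = i} = {y\<in>V. c y = c u}"
      using u inj by (auto dest: inj_onD)
    then show "\<exists>x\<in>V. {y \<in> V. (h \<circ> c) y = i} \<subseteq> nbhd E x" using dom u by auto
  qed
  show ?thesis using img p d unfolding dom_coloring_def by blast
qed

lemma chi_le: "dom_coloring V E c k \<Longrightarrow> chi_dom V E \<le> k"
  unfolding chi_dom_def by (rule Least_le) blast

lemma chi_ex:
  assumes "finite V" "\<forall>u\<in>V. \<exists>w\<in>V. E w u" "\<forall>x. \<not> E x x"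
  shows "\<exists>c. dom_coloring V E c (chi_dom V E)"
proof -
  have "\<exists>c'. dom_coloring V E c' (card (id ` V))"
    by (rule gen_col) (use assms in \<open>auto simp: nbhd_def\<close>)
  then obtain c' where "dom_coloring V E c' (card (id ` V))" by blast
  then have "\<exists>k c. dom_coloring V E c k" by blast
  then show ?thesis unfolding chi_dom_def by (rule LeastI_ex)
qed

lemma no_iso:
  assumes "connected_graph V E" "card V \<ge> 2" "sgraph V E" "u \<in> V"
  shows "\<exists>w\<in>V. E w u"
proof -
  have "finite V" using assms(3) sgraph_def by auto
  have "\<exists>w\<in>V. w \<noteq> u"
  proof (rule ccontr)
    assume "\<not> ?thesis"
    then have "V \<subseteq> {u}" by auto
    then have "card V \<le> 1" using card_mono[of "{u}" V] by simp
    then show False using assms(2) by simp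
  qed
  then obtain w where w: "w \<in> V" "w \<noteq> u" by blast
  have "E\<^sup>*\<^sup>* u w" using assms(1) w assms(4) unfolding connected_graph_def reach_def by blast
  then obtain z where "E u z" using w(2) by (metis converse_rtranclpE)
  then show ?thesis using assms(3) unfolding sgraph_def by blast
qed


theorem theorem2p2:
  fixes V :: "'a set" and E :: "'a \<Rightarrow> 'a \<Rightarrow> bool" and v :: 'a
  assumes "sgraph V E"
    and "connected_graph V E"
    and "card V \<ge> 3"
    and "v \<in> V"
    and "\<not> cut_vertex V E v"
  shows "int (chi_dom V E) - 1 \<le> int (chi_dom (del_vertex_V V v) (del_vertex_E E v))
       \<and> int (chi_dom (del_vertex_V V v) (del_vertex_E E v)) \<le> int (chi_dom V E) + int (degree E v) - 1"
proof -
  define V' where "V' = del_vertex_V V v"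
  define E' where "E' = del_vertex_E E v"
  have V'd: "V' = V - {v}" unfolding V'_def del_vertex_V_def by simp
  have E'd: "\<And>x y. E' x y \<longleftrightarrow> E x y \<and> x \<noteq> v \<and> y \<noteq> v" unfolding E'_def del_vertex_E_def by simp
  have finV: "finite V" and Ein: "\<And>x y. E x y \<Longrightarrow> x \<in> V \<and> y \<in> V"
    and sym: "\<And>x y. E x y \<Longrightarrow> E y x" and irr: "\<And>x. \<not> E x x"
    using assms(1) unfolding sgraph_def by auto
  have finV': "finite V'" using finV V'd by simp
  have cardV': "card V' \<ge> 2" using assms(3,4) finV V'd by simp
  have sg': "sgraph V' E'" unfolding sgraph_def using finV' Ein sym irr by (auto simp: E'd V'd)
  have compG: "components V E = {V}"
  proof -
    have "\<And>x. x \<in> V \<Longrightarrow> {y \<in> V. reach E x y} = V"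
      using assms(2) unfolding connected_graph_def by auto
    moreover have "V \<noteq> {}" using assms(4) by auto
    ultimately show ?thesis unfolding components_def by auto
  qed
  have V'ne: "V' \<noteq> {}" using cardV' by auto
  have fincomp: "finite (components V' E')"
  proof -
    have "components V' E' = (\<lambda>x. {y \<in> V'. reach E' x y}) ` V'" unfolding components_def by auto
    then show ?thesis using finV' by simp
  qed
  have "card (components V' E') \<le> 1"
    using assms(4,5) compG unfolding cut_vertex_def V'_def E'_def by simp
  then have C: "\<forall>A\<in>components V' E'. \<forall>B\<in>components V' E'. A = B"
    using fincomp card_le_Suc0_iff_eq by (metis One_nat_def)
  have conn': "connected_graph V' E'"
    unfolding connected_graph_def
  proof (intro conjI ballI)
    show "V' \<noteq> {}" by fact
    fix x y assume xy: "x \<in> V'" "y \<in> V'"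
    have m1: "{z \<in> V'. reach E' x z} \<in> components V' E'" and m2: "{z \<in> V'. reach E' y z} \<in> components V' E'"
      using xy unfolding components_def by auto
    have "{z \<in> V'. reach E' x z} = {z \<in> V'. reach E' y z}" by (rule C[rule_format, OF m1 m2])
    moreover have "y \<in> {z \<in> V'. reach E' y z}" using xy unfolding reach_def by auto
    ultimately show "reach E' x y" by auto
  qed
  have noiso: "\<forall>u\<in>V. \<exists>w\<in>V. E w u" using no_iso[OF assms(2) _ assms(1)] assms(3) by auto
  have noiso': "\<forall>u\<in>V'. \<exists>w\<in>V'. E' w u" using no_iso[OF conn' cardV' sg'] by auto
  obtain c where c: "dom_coloring V E c (chi_dom V E)" using chi_ex[OF finV noiso] irr by blast
  obtain c' where c': "dom_coloring V' E' c' (chi_dom V' E')"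
    using chi_ex[OF finV' noiso'] irr E'd by blast
  define k where "k = chi_dom V E"
  define k' where "k' = chi_dom V' E'"
  have low: "k \<le> k' + 1"
  proof -
    define d where "d u = (if u = v then k' else c' u)" for u
    have c'img: "c' ` V' = {..<k'}" using c' unfolding dom_coloring_def k'_def by simp
    have c'lt: "\<And>u. u \<in> V' \<Longrightarrow> c' u < k'" using c'img by auto
    have "\<exists>cc. dom_coloring V E cc (card (d ` V))"
    proof (rule gen_col[OF finV])
      show "\<forall>x\<in>V. \<forall>y\<in>V. E x y \<longrightarrow> d x \<noteq> d y"
      proof (intro ballI impI)
        fix x y assume xy: "x \<in> V" "y \<in> V" "E x y"
        show "d x \<noteq> d y"
        proof (cases "x = v \<or> y = v")
          case True then show ?thesis using xy irr c'lt V'd unfolding d_def by (metis DiffI less_irrefl singletonD)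
        next
          case False
          then have "E' x y" "x \<in> V'" "y \<in> V'" using xy E'd V'd by auto
          then show ?thesis using c' False unfolding dom_coloring_def d_def k'_def by auto
        qed
      qed
      show "\<forall>u\<in>V. \<exists>x\<in>V. {y \<in> V. d y = d u} \<subseteq> nbhd E x"
      proof
        fix u assume u: "u \<in> V"
        show "\<exists>x\<in>V. {y \<in> V. d y = d u} \<subseteq> nbhd E x"
        proof (cases "u = v")
          case True
          have "{y \<in> V. d y = d u} \<subseteq> {v}" using True c'lt V'd unfolding d_def by fastforce
          moreover obtain w where "w \<in> V" "E w v" using noiso assms(4) by blast
          ultimately show ?thesis unfolding nbhd_def by blast
        next
          case False
          then have uV': "u \<in> V'" using u V'd by simp
          then have "c' u < k'" by (rule c'lt)
          then obtain x where x: "x \<in> V'" "{y \<in> V'. c' y = c' u} \<subseteq> nbhd E' x"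
            using c' unfolding dom_coloring_def k'_def by blast
          have "{y \<in> V. d y = d u} \<subseteq> {y \<in> V'. c' y = c' u}"
            using False \<open>c' u < k'\<close> V'd unfolding d_def by auto
          also have "\<dots> \<subseteq> nbhd E x" using x(2) E'd unfolding nbhd_def by auto
          finally show ?thesis using x(1) V'd by auto
        qed
      qed
    qed
    then have "k \<le> card (d ` V)" unfolding k_def using chi_le by blast
    also have "card (d ` V) \<le> card {..k'}"
      by (rule card_mono) (auto simp: d_def c'lt V'd less_imp_le)
    finally show ?thesis by simp
  qed
  have up: "k' + 1 \<le> k + degree E v"
  proof -
    have cimg: "c ` V = {..<k}" using c unfolding dom_coloring_def k_def by simp
    define B where "B = {j. j < k \<and> \<not> (\<exists>x\<in>V'. {y\<in>V. c y = j} - {v} \<subseteq> nbhd E x)}"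
    have Bsub: "\<And>j y. j \<in> B \<Longrightarrow> y \<in> V \<Longrightarrow> c y = j \<Longrightarrow> E v y"
    proof -
      fix j y assume j: "j \<in> B" and y: "y \<in> V" "c y = j"
      then have "j < k" unfolding B_def by auto
      then obtain x where x: "x \<in> V" "{y\<in>V. c y = j} \<subseteq> nbhd E x"
        using c unfolding dom_coloring_def k_def by blast
      have "x = v"
      proof (rule ccontr)
        assume "x \<noteq> v"
        then have "x \<in> V'" using x V'd by auto
        then show False using j x(2) unfolding B_def by blast
      qed
      then show "E v y" using x(2) y unfolding nbhd_def by auto
    qed
    define d where "d u = (if c u \<in> B then Inr u else Inl (c u))" for u
    have "\<exists>cc. dom_coloring V' E' cc (card (d ` V'))"
    proof (rule gen_col[OF finV'])
      show "\<forall>x\<in>V'. \<forall>y\<in>V'. E' x y \<longrightarrow> d x \<noteq> d y"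
      proof (intro ballI impI)
        fix x y assume xy: "x \<in> V'" "y \<in> V'" "E' x y"
        then have "c x \<noteq> c y" using c E'd V'd unfolding dom_coloring_def by auto
        moreover have "x \<noteq> y" using xy E'd irr by auto
        ultimately show "d x \<noteq> d y" unfolding d_def by auto
      qed
      show "\<forall>u\<in>V'. \<exists>x\<in>V'. {y \<in> V'. d y = d u} \<subseteq> nbhd E' x"
      proof
        fix u assume u: "u \<in> V'"
        show "\<exists>x\<in>V'. {y \<in> V'. d y = d u} \<subseteq> nbhd E' x"
        proof (cases "c u \<in> B")
          case True
          have "{y \<in> V'. d y = d u} \<subseteq> {u}" using True unfolding d_def by (auto split: if_splits)
          moreover obtain w where "w \<in> V'" "E' w u" using noiso' u by blast
          ultimately show ?thesis unfolding nbhd_def by blast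
        next
          case False
          have "c u < k" using u V'd cimg by auto
          then obtain x where x: "x \<in> V'" "{y\<in>V. c y = c u} - {v} \<subseteq> nbhd E x"
            using False unfolding B_def by blast
          have "{y \<in> V'. d y = d u} \<subseteq> {y\<in>V. c y = c u} - {v}"
            using False V'd unfolding d_def by (auto split: if_splits)
          also have "\<dots> \<subseteq> nbhd E' x" using x E'd V'd unfolding nbhd_def by auto
          finally show ?thesis using x(1) by auto
        qed
      qed
    qed
    then have kk: "k' \<le> card (d ` V')" unfolding k'_def using chi_le by blast
    have "d ` V' \<subseteq> Inl ` ({..<k} - B) \<union> Inr ` (nbhd E v)"
    proof
      fix z assume "z \<in> d ` V'"
      then obtain u where u: "u \<in> V'" "z = d u" by blast
      then have "c u < k" using V'd cimg by auto
      then show "z \<in> Inl ` ({..<k} - B) \<union> Inr ` (nbhd E v)"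
        using u Bsub V'd unfolding d_def nbhd_def by auto
    qed
    moreover have finN: "finite (nbhd E v)"
      by (rule finite_subset[of _ V]) (use finV Ein in \<open>auto simp: nbhd_def\<close>)
    ultimately have "card (d ` V') \<le> card (Inl ` ({..<k} - B) \<union> Inr ` (nbhd E v) :: (nat + 'a) set)"
      using finN by (intro card_mono) auto
    also have "\<dots> \<le> card (Inl ` ({..<k} - B) :: (nat + 'a) set) + card (Inr ` (nbhd E v) :: (nat + 'a) set)"
      by (rule card_Un_le)
    also have "\<dots> = card ({..<k} - B) + degree E v"
      unfolding degree_def by (simp add: card_image)
    finally have A: "k' \<le> card ({..<k} - B) + degree E v" using kk by linarith
    have degpos: "degree E v \<ge> 1"
    proof -
      obtain w where "w \<in> V" "E w v" using noiso assms(4) by blast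
      then have "w \<in> nbhd E v" using sym unfolding nbhd_def by auto
      moreover have "finite (nbhd E v)" using finV Ein by (auto simp: nbhd_def intro: finite_subset[of _ V])
      ultimately show ?thesis unfolding degree_def by (metis One_nat_def Suc_leI card_gt_0_iff empty_iff)
    qed
    show ?thesis
    proof (cases "B = {}")
      case True
      have "d ` V' \<subseteq> Inl ` {..<k}" using True V'd cimg unfolding d_def by auto
      then have "card (d ` V') \<le> card (Inl ` {..<k} :: (nat + 'a) set)" by (intro card_mono) auto
      also have "\<dots> = k" by (simp add: card_image)
      finally show ?thesis using kk degpos by linarith
    next
      case False
      have "B \<subseteq> {..<k}" unfolding B_def by auto
      then have "card ({..<k} - B) = k - card B" by (simp add: card_Diff_subset finite_subset)
      moreover have "card B \<ge> 1" using False \<open>B \<subseteq> {..<k}\<close>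
        by (metis One_nat_def Suc_leI card_gt_0_iff finite_lessThan finite_subset)
      moreover have "card B \<le> k" using \<open>B \<subseteq> {..<k}\<close> card_mono[of "{..<k}" B] by simp
      ultimately show ?thesis using A by linarith
    qed
  qed
  show ?thesis using low up unfolding k_def k'_def V'_def E'_def by simp
qed

end
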